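(* Let $a\neq 0$ be a real number. On the space of entire functions $f(\alpha)$ of one complex variable, define the linear operators $$N=\frac{e^{a\alpha}-1}{a}\,\frac{d}{d\alpha},\quad A_+=\alpha,\quad A_-=e^{a\alpha}\frac{d}{d\alpha},\quad B_+=\Big(\frac{1-e^{-a\alpha}}{a}\Big)^2,\quad B_-=e^{a\alpha}\frac{d^2}{d\alpha^2},\quad M=1,$$ where functions of $\alpha$ act by multiplication. Then these operators satisfy the commutation relations $[N,A_+]=\frac{e^{aA_+}-1}{a}$, $[N,A_-]=-A_-$, $[A_-,A_+]=Me^{aA_+}$, $[N,B_+]=2B_+$, $[N,B_-]=-2B_--aA_-N$, $[B_-,B_+]=2(1+e^{-aA_+})N+2M-2aA_-B_+$, $[A_+,B_-]=-(1+e^{aA_+})A_-+a\,e^{aA_+}MN$, $[A_+,B_+]=0$, $[A_-,B_+]=2\frac{1-e^{-aA_+}}{a}$, $[A_-,B_-]=-aA_-^2$, and $[M,X]=0$ for each of these operators $X$.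
   Context: $[X,Y]=XY-YX$ denotes the commutator of operators, and $e^{cA_+}$ is the operator of multiplication by $e^{c\alpha}$. These relations are the commutation rules of the non-standard quantum two-photon algebra $U_{a}(h_6)$. *)

theory Defs
  imports "HOL-Analysis.Analysis"
begin

type_synonym cop = "(complex \<Rightarrow> complex) \<Rightarrow> (complex \<Rightarrow> complex)"

definition mulop :: "(complex \<Rightarrow> complex) \<Rightarrow> cop" where
  "mulop g f = (\<lambda>z. g z * f z)"

definition Dop :: cop where
  "Dop f = deriv f"

definition comm :: "cop \<Rightarrow> cop \<Rightarrow> cop" where
  "comm X Y f = (\<lambda>z. X (Y f) z - Y (X f) z)"

definition opN :: "real \<Rightarrow> cop" where
  "opN a f = mulop (\<lambda>z. (exp (of_real a * z) - 1) / of_real a) (Dop f)"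

definition opAp :: cop where
  "opAp f = mulop (\<lambda>z. z) f"

definition opAm :: "real \<Rightarrow> cop" where
  "opAm a f = mulop (\<lambda>z. exp (of_real a * z)) (Dop f)"

definition opBp :: "real \<Rightarrow> cop" where
  "opBp a f = mulop (\<lambda>z. ((1 - exp (- (of_real a * z))) / of_real a)^2) f"

definition opBm :: "real \<Rightarrow> cop" where
  "opBm a f = mulop (\<lambda>z. exp (of_real a * z)) (Dop (Dop f))"

definition opM :: cop where
  "opM f = mulop (\<lambda>z. 1) f"

end

theory Submission
  imports Defs "HOL-Complex_Analysis.Complex_Analysis"
begin

lemma holo_deriv_UNIV: "f holomorphic_on UNIV \<Longrightarrow> deriv f holomorphic_on UNIV"
  by (rule holomorphic_deriv) auto

lemma holo_hasd: "f holomorphic_on UNIV \<Longrightarrow> (f has_field_derivative deriv f z) (at z)"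
  by (meson DERIV_deriv_iff_field_differentiable UNIV_I holomorphic_on_imp_differentiable_at open_UNIV)

context
  fixes a :: real and f :: "complex \<Rightarrow> complex"
  assumes a: "a \<noteq> 0" and hf: "f holomorphic_on UNIV"
begin

abbreviation "c \<equiv> (of_real a :: complex)"

lemma h1: "deriv f holomorphic_on UNIV" using hf holo_deriv_UNIV by blast
lemma h2: "deriv (deriv f) holomorphic_on UNIV" using h1 holo_deriv_UNIV by blast
lemma d0: "(f has_field_derivative deriv f z) (at z)" using hf holo_hasd by blast
lemma d1: "(deriv f has_field_derivative deriv (deriv f) z) (at z)" using h1 holo_hasd by blast
lemma d2: "(deriv (deriv f) has_field_derivative deriv (deriv (deriv f)) z) (at z)" using h2 holo_hasd by blast

lemmas dd = d0[THEN DERIV_chain2] d1[THEN DERIV_chain2] d2[THEN DERIV_chain2]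
  d0 d1 d2


abbreviation "E z \<equiv> exp (c * z)"
abbreviation "G z \<equiv> (1 - exp (- (c * z))) / c"
abbreviation "H z \<equiv> exp (- (c * z))"
abbreviation "f1 \<equiv> deriv f"
abbreviation "f2 \<equiv> deriv (deriv f)"
abbreviation "f3 \<equiv> deriv (deriv (deriv f))"


lemma L1: "deriv (\<lambda>z. z * f z) = (\<lambda>z. f z + z * f1 z)" by (rule ext, rule DERIV_imp_deriv, (auto intro!: derivative_eq_intros d0 d1 d2 simp: field_simps a power2_eq_square)[1])
lemma L1b: "deriv (\<lambda>z. f z + z * f1 z) = (\<lambda>z. f1 z + (f1 z + z * f2 z))" by (rule ext, rule DERIV_imp_deriv, (auto intro!: derivative_eq_intros d0 d1 d2 simp: field_simps a power2_eq_square)[1])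
lemma LE1: "deriv (\<lambda>z. E z * f1 z) = (\<lambda>z. c * E z * f1 z + E z * f2 z)" by (rule ext, rule DERIV_imp_deriv, (auto intro!: derivative_eq_intros d0 d1 d2 simp: field_simps a power2_eq_square)[1])
lemma LE1b: "deriv (\<lambda>z. c * E z * f1 z + E z * f2 z) = (\<lambda>z. c * (c * E z) * f1 z + c * E z * f2 z + (c * E z * f2 z + E z * f3 z))" by (rule ext, rule DERIV_imp_deriv, (auto intro!: derivative_eq_intros d0 d1 d2 simp: field_simps a power2_eq_square)[1])
lemma LE2: "deriv (\<lambda>z. E z * f2 z) = (\<lambda>z. c * E z * f2 z + E z * f3 z)" by (rule ext, rule DERIV_imp_deriv, (auto intro!: derivative_eq_intros d0 d1 d2 simp: field_simps a power2_eq_square)[1])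
lemma LN1: "deriv (\<lambda>z. (E z - 1) / c * f1 z) = (\<lambda>z. E z * f1 z + (E z - 1) / c * f2 z)" by (rule ext, rule DERIV_imp_deriv, (auto intro!: derivative_eq_intros d0 d1 d2 simp: field_simps a power2_eq_square)[1])
lemma LN1b: "deriv (\<lambda>z. E z * f1 z + (E z - 1) / c * f2 z) = (\<lambda>z. c * E z * f1 z + E z * f2 z + (E z * f2 z + (E z - 1) / c * f3 z))" by (rule ext, rule DERIV_imp_deriv, (auto intro!: derivative_eq_intros d0 d1 d2 simp: field_simps a power2_eq_square)[1])
lemma LG: "deriv (\<lambda>z. (G z)^2 * f z) = (\<lambda>z. 2 * G z * H z * f z + (G z)^2 * f1 z)" by (rule ext, rule DERIV_imp_deriv, (auto intro!: derivative_eq_intros d0 d1 d2 simp: field_simps a power2_eq_square)[1])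
lemma LGb: "deriv (\<lambda>z. 2 * G z * H z * f z + (G z)^2 * f1 z) = (\<lambda>z. (2 * H z * H z - 2 * G z * c * H z) * f z + 2 * G z * H z * f1 z + (2 * G z * H z * f1 z + (G z)^2 * f2 z))" by (rule ext, rule DERIV_imp_deriv, (auto intro!: derivative_eq_intros d0 d1 d2 simp: field_simps a power2_eq_square)[1])

lemma C0: "comm (opN a) opAp f = (\<lambda>z. (exp (of_real a * z) - 1) / of_real a * f z)"
  unfolding comm_def opN_def opAp_def opAm_def opBp_def opBm_def opM_def mulop_def Dop_def
  apply ((simp only: mult_1_left L1 L1b LE1 LE1b LE2 LN1 LN1b LG LGb)?)
  apply (rule ext)
  apply (simp add: field_simps a exp_minus power2_eq_square)
  done

lemma C1: "comm (opN a) (opAm a) f = (\<lambda>z. - opAm a f z)"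
  unfolding comm_def opN_def opAp_def opAm_def opBp_def opBm_def opM_def mulop_def Dop_def
  apply ((simp only: mult_1_left L1 L1b LE1 LE1b LE2 LN1 LN1b LG LGb)?)
  apply (rule ext)
  apply (simp add: field_simps a exp_minus power2_eq_square)
  done

lemma C2: "comm (opAm a) opAp f = (\<lambda>z. opM (\<lambda>w. exp (of_real a * w) * f w) z)"
  unfolding comm_def opN_def opAp_def opAm_def opBp_def opBm_def opM_def mulop_def Dop_def
  apply ((simp only: mult_1_left L1 L1b LE1 LE1b LE2 LN1 LN1b LG LGb)?)
  apply (rule ext)
  apply (simp add: field_simps a exp_minus power2_eq_square)
  done

lemma C3: "comm (opN a) (opBp a) f = (\<lambda>z. 2 * opBp a f z)"
  unfolding comm_def opN_def opAp_def opAm_def opBp_def opBm_def opM_def mulop_def Dop_def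
  apply ((simp only: mult_1_left L1 L1b LE1 LE1b LE2 LN1 LN1b LG LGb)?)
  apply (rule ext)
  apply (simp add: field_simps a exp_minus power2_eq_square)
  done

lemma C4: "comm (opN a) (opBm a) f = (\<lambda>z. - 2 * opBm a f z - of_real a * opAm a (opN a f) z)"
  unfolding comm_def opN_def opAp_def opAm_def opBp_def opBm_def opM_def mulop_def Dop_def
  apply ((simp only: mult_1_left L1 L1b LE1 LE1b LE2 LN1 LN1b LG LGb)?)
  apply (rule ext)
  apply (simp add: field_simps a exp_minus power2_eq_square)
  done

lemma C5: "comm (opBm a) (opBp a) f = (\<lambda>z. 2 * (1 + exp (- (of_real a * z))) * opN a f z
        + 2 * opM f z - 2 * of_real a * opAm a (opBp a f) z)"
  unfolding comm_def opN_def opAp_def opAm_def opBp_def opBm_def opM_def mulop_def Dop_def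
  apply ((simp only: mult_1_left L1 L1b LE1 LE1b LE2 LN1 LN1b LG LGb)?)
  apply (rule ext)
  apply (simp add: field_simps a exp_minus power2_eq_square)
  done

lemma C6: "comm opAp (opBm a) f = (\<lambda>z. - (1 + exp (of_real a * z)) * opAm a f z
        + of_real a * exp (of_real a * z) * opM (opN a f) z)"
  unfolding comm_def opN_def opAp_def opAm_def opBp_def opBm_def opM_def mulop_def Dop_def
  apply ((simp only: mult_1_left L1 L1b LE1 LE1b LE2 LN1 LN1b LG LGb)?)
  apply (rule ext)
  apply (simp add: field_simps a exp_minus power2_eq_square)
  done

lemma C7: "comm opAp (opBp a) f = (\<lambda>z. 0)"
  unfolding comm_def opN_def opAp_def opAm_def opBp_def opBm_def opM_def mulop_def Dop_def
  apply ((simp only: mult_1_left L1 L1b LE1 LE1b LE2 LN1 LN1b LG LGb)?)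
  apply (rule ext)
  apply (simp add: field_simps a exp_minus power2_eq_square)
  done

lemma C8: "comm (opAm a) (opBp a) f = (\<lambda>z. 2 * ((1 - exp (- (of_real a * z))) / of_real a) * f z)"
  unfolding comm_def opN_def opAp_def opAm_def opBp_def opBm_def opM_def mulop_def Dop_def
  apply ((simp only: mult_1_left L1 L1b LE1 LE1b LE2 LN1 LN1b LG LGb)?)
  apply (rule ext)
  apply (simp add: field_simps a exp_minus power2_eq_square)
  done

lemma C9: "comm (opAm a) (opBm a) f = (\<lambda>z. - of_real a * opAm a (opAm a f) z)"
  unfolding comm_def opN_def opAp_def opAm_def opBp_def opBm_def opM_def mulop_def Dop_def
  apply ((simp only: mult_1_left L1 L1b LE1 LE1b LE2 LN1 LN1b LG LGb)?)
  apply (rule ext)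
  apply (simp add: field_simps a exp_minus power2_eq_square)
  done

lemma C10: "comm opM (opN a) f = (\<lambda>z. 0)"
  unfolding comm_def opN_def opAp_def opAm_def opBp_def opBm_def opM_def mulop_def Dop_def
  apply ((simp only: mult_1_left L1 L1b LE1 LE1b LE2 LN1 LN1b LG LGb)?)
  apply (rule ext)
  apply (simp add: field_simps a exp_minus power2_eq_square)
  done

lemma C11: "comm opM opAp f = (\<lambda>z. 0)"
  unfolding comm_def opN_def opAp_def opAm_def opBp_def opBm_def opM_def mulop_def Dop_def
  apply ((simp only: mult_1_left L1 L1b LE1 LE1b LE2 LN1 LN1b LG LGb)?)
  apply (rule ext)
  apply (simp add: field_simps a exp_minus power2_eq_square)
  done

lemma C12: "comm opM (opAm a) f = (\<lambda>z. 0)"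
  unfolding comm_def opN_def opAp_def opAm_def opBp_def opBm_def opM_def mulop_def Dop_def
  apply ((simp only: mult_1_left L1 L1b LE1 LE1b LE2 LN1 LN1b LG LGb)?)
  apply (rule ext)
  apply (simp add: field_simps a exp_minus power2_eq_square)
  done

lemma C13: "comm opM (opBp a) f = (\<lambda>z. 0)"
  unfolding comm_def opN_def opAp_def opAm_def opBp_def opBm_def opM_def mulop_def Dop_def
  apply ((simp only: mult_1_left L1 L1b LE1 LE1b LE2 LN1 LN1b LG LGb)?)
  apply (rule ext)
  apply (simp add: field_simps a exp_minus power2_eq_square)
  done

lemma C14: "comm opM (opBm a) f = (\<lambda>z. 0)"
  unfolding comm_def opN_def opAp_def opAm_def opBp_def opBm_def opM_def mulop_def Dop_def
  apply ((simp only: mult_1_left L1 L1b LE1 LE1b LE2 LN1 LN1b LG LGb)?)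
  apply (rule ext)
  apply (simp add: field_simps a exp_minus power2_eq_square)
  done

lemma C15: "comm opM opM f = (\<lambda>z. 0)"
  unfolding comm_def opN_def opAp_def opAm_def opBp_def opBm_def opM_def mulop_def Dop_def
  apply ((simp only: mult_1_left L1 L1b LE1 LE1b LE2 LN1 LN1b LG LGb)?)
  apply (rule ext)
  apply (simp add: field_simps a exp_minus power2_eq_square)
  done

lemma mainf: "comm (opN a) opAp f = (\<lambda>z. (exp (of_real a * z) - 1) / of_real a * f z) \<and> comm (opN a) (opAm a) f = (\<lambda>z. - opAm a f z) \<and> comm (opAm a) opAp f = (\<lambda>z. opM (\<lambda>w. exp (of_real a * w) * f w) z) \<and> comm (opN a) (opBp a) f = (\<lambda>z. 2 * opBp a f z) \<and> comm (opN a) (opBm a) f = (\<lambda>z. - 2 * opBm a f z - of_real a * opAm a (opN a f) z) \<and> comm (opBm a) (opBp a) f = (\<lambda>z. 2 * (1 + exp (- (of_real a * z))) * opN a f z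
        + 2 * opM f z - 2 * of_real a * opAm a (opBp a f) z) \<and> comm opAp (opBm a) f = (\<lambda>z. - (1 + exp (of_real a * z)) * opAm a f z
        + of_real a * exp (of_real a * z) * opM (opN a f) z) \<and> comm opAp (opBp a) f = (\<lambda>z. 0) \<and> comm (opAm a) (opBp a) f = (\<lambda>z. 2 * ((1 - exp (- (of_real a * z))) / of_real a) * f z) \<and> comm (opAm a) (opBm a) f = (\<lambda>z. - of_real a * opAm a (opAm a f) z) \<and> comm opM (opN a) f = (\<lambda>z. 0) \<and> comm opM opAp f = (\<lambda>z. 0) \<and> comm opM (opAm a) f = (\<lambda>z. 0) \<and> comm opM (opBp a) f = (\<lambda>z. 0) \<and> comm opM (opBm a) f = (\<lambda>z. 0) \<and> comm opM opM f = (\<lambda>z. 0)"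
  using C0 C1 C2 C3 C4 C5 C6 C7 C8 C9 C10 C11 C12 C13 C14 C15 by blast

end

theorem mainTheorem4:
  fixes a :: real
  assumes "a \<noteq> 0"
  shows "\<forall>f. f holomorphic_on UNIV \<longrightarrow>
   comm (opN a) opAp f = (\<lambda>z. (exp (of_real a * z) - 1) / of_real a * f z) \<and>
   comm (opN a) (opAm a) f = (\<lambda>z. - opAm a f z) \<and>
   comm (opAm a) opAp f = (\<lambda>z. opM (\<lambda>w. exp (of_real a * w) * f w) z) \<and>
   comm (opN a) (opBp a) f = (\<lambda>z. 2 * opBp a f z) \<and>
   comm (opN a) (opBm a) f = (\<lambda>z. - 2 * opBm a f z - of_real a * opAm a (opN a f) z) \<and>
   comm (opBm a) (opBp a) f = (\<lambda>z. 2 * (1 + exp (- (of_real a * z))) * opN a f z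
        + 2 * opM f z - 2 * of_real a * opAm a (opBp a f) z) \<and>
   comm opAp (opBm a) f = (\<lambda>z. - (1 + exp (of_real a * z)) * opAm a f z
        + of_real a * exp (of_real a * z) * opM (opN a f) z) \<and>
   comm opAp (opBp a) f = (\<lambda>z. 0) \<and>
   comm (opAm a) (opBp a) f = (\<lambda>z. 2 * ((1 - exp (- (of_real a * z))) / of_real a) * f z) \<and>
   comm (opAm a) (opBm a) f = (\<lambda>z. - of_real a * opAm a (opAm a f) z) \<and>
   comm opM (opN a) f = (\<lambda>z. 0) \<and> comm opM opAp f = (\<lambda>z. 0) \<and>
   comm opM (opAm a) f = (\<lambda>z. 0) \<and> comm opM (opBp a) f = (\<lambda>z. 0) \<and>
   comm opM (opBm a) f = (\<lambda>z. 0) \<and> comm opM opM f = (\<lambda>z. 0)"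
  using mainf[OF assms] by blast

end
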